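(* Let $\boldsymbol H:\mathbb T^N\to\mathbb T^N$ satisfy Assumption (H1) with datum $(E,\kappa)$. Then $\boldsymbol H$ is a local diffeomorphism, and at every point, for every $i\in[1,N]$ and $j\ne i$, $$|(D\boldsymbol H^{-1})_{ij}|<\kappa^{-1}\Big[E+\frac{E^2}{\kappa-E}\Big]N^{-1},\qquad |(D\boldsymbol H^{-1})_{ii}|\le\kappa^{-1}\Big[1+E\Big(E+\frac{E^2}{\kappa-E}\Big)N^{-1}\Big],$$ $$|(D\boldsymbol H^{-1})_{ii}|\ge|(D\boldsymbol H)_{ii}|^{-1}\Big(1-E\Big(E+\frac{E^2}{\kappa-E}\Big)N^{-1}\Big),$$ where $D\boldsymbol H^{-1}$ denotes the inverse matrix $(D\boldsymbol H)^{-1}$ at the point.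
   Context: $\mathbb T=\mathbb R/\mathbb Z$; derivatives of maps $\mathbb T^N\to\mathbb T^N$ are taken via lifts. Assumption (H1) with datum $(E,\kappa)$, $E,\kappa\ge0$, $\kappa-E>1$: $\boldsymbol H=(H_1,\dots,H_N)\in C^1(\mathbb T^N,\mathbb T^N)$ and $|\partial_iH_i|>\kappa$, $|\partial_jH_i|<EN^{-1}$ everywhere, for all $i$ and all $j\ne i$. *)

theory Defs
  imports "HOL-Analysis.Analysis"
begin

definition lattice_point :: "real ^ 'n \<Rightarrow> bool" where
  "lattice_point k \<longleftrightarrow> (\<forall>i. k $ i \<in> \<int>)"

text \<open>A map R^N -> R^N is the lift of a map of the torus T^N = R^N/Z^N iff
  integer translations of the argument change the value by integer vectors.\<close>
definition torus_lift :: "(real ^ 'n \<Rightarrow> real ^ 'n) \<Rightarrow> bool" where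
  "torus_lift F \<longleftrightarrow> (\<forall>x k. lattice_point k \<longrightarrow> lattice_point (F (x + k) - F x))"

definition C1_on :: "'a::euclidean_space set \<Rightarrow> ('a \<Rightarrow> 'b::euclidean_space) \<Rightarrow> bool" where
  "C1_on S f \<longleftrightarrow> (\<exists>f'. (\<forall>x\<in>S. (f has_derivative blinfun_apply (f' x)) (at x)) \<and> continuous_on S f')"

definition local_diffeomorphism :: "('a::euclidean_space \<Rightarrow> 'a) \<Rightarrow> bool" where
  "local_diffeomorphism f \<longleftrightarrow>
     (\<forall>x. \<exists>U V g. open U \<and> open V \<and> x \<in> U \<and> f ` U = V \<and>
          (\<forall>y\<in>U. g (f y) = y) \<and> (\<forall>z\<in>V. f (g z) = z) \<and> C1_on U f \<and> C1_on V g)"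

end

theory Submission
  imports Defs
begin


lemma row_split:
  fixes A :: "real^'n^'n" and f :: "'n \<Rightarrow> real"
  shows "(\<Sum>k\<in>UNIV. A$i$k * f k) = A$i$i * f i + (\<Sum>k\<in>UNIV-{i}. A$i$k * f k)"
  by (simp add: sum.remove[of UNIV i])

lemma row_upper:
  fixes A :: "real^'n^'n" and f :: "'n \<Rightarrow> real"
  assumes "(\<Sum>k\<in>UNIV. A$i$k * f k) = d"
  shows "\<bar>A$i$i\<bar> * \<bar>f i\<bar> \<le> \<bar>d\<bar> + (\<Sum>k\<in>UNIV-{i}. \<bar>A$i$k\<bar> * \<bar>f k\<bar>)"
    and "\<bar>A$i$i\<bar> * \<bar>f i\<bar> \<ge> \<bar>d\<bar> - (\<Sum>k\<in>UNIV-{i}. \<bar>A$i$k\<bar> * \<bar>f k\<bar>)"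
proof -
  have e: "A$i$i * f i = d - (\<Sum>k\<in>UNIV-{i}. A$i$k * f k)"
    using assms row_split[of A i f] by simp
  have s: "\<bar>\<Sum>k\<in>UNIV-{i}. A$i$k * f k\<bar> \<le> (\<Sum>k\<in>UNIV-{i}. \<bar>A$i$k\<bar> * \<bar>f k\<bar>)"
    using sum_abs[of "\<lambda>k. A$i$k * f k" "UNIV-{i}"] by (simp add: abs_mult)
  have a: "\<bar>A$i$i\<bar> * \<bar>f i\<bar> = \<bar>d - (\<Sum>k\<in>UNIV-{i}. A$i$k * f k)\<bar>"
    using e by (simp add: abs_mult[symmetric])
  have t1: "\<bar>d - (\<Sum>k\<in>UNIV-{i}. A$i$k * f k)\<bar> \<le> \<bar>d\<bar> + \<bar>\<Sum>k\<in>UNIV-{i}. A$i$k * f k\<bar>"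
    by (rule abs_triangle_ineq4)
  have t2: "\<bar>d\<bar> - \<bar>\<Sum>k\<in>UNIV-{i}. A$i$k * f k\<bar> \<le> \<bar>d - (\<Sum>k\<in>UNIV-{i}. A$i$k * f k)\<bar>"
    by (rule abs_triangle_ineq2)
  show "\<bar>A$i$i\<bar> * \<bar>f i\<bar> \<le> \<bar>d\<bar> + (\<Sum>k\<in>UNIV-{i}. \<bar>A$i$k\<bar> * \<bar>f k\<bar>)"
    using a t1 s by linarith
  show "\<bar>A$i$i\<bar> * \<bar>f i\<bar> \<ge> \<bar>d\<bar> - (\<Sum>k\<in>UNIV-{i}. \<bar>A$i$k\<bar> * \<bar>f k\<bar>)"
    using a t2 s by linarith
qed

lemma off_sum_le:
  fixes A :: "real^'n^'n" and f g :: "'n \<Rightarrow> real"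
  assumes "\<And>k. k \<noteq> i \<Longrightarrow> \<bar>A$i$k\<bar> \<le> c" "\<And>k. k \<noteq> i \<Longrightarrow> \<bar>f k\<bar> \<le> g k"
  shows "(\<Sum>k\<in>UNIV-{i}. \<bar>A$i$k\<bar> * \<bar>f k\<bar>) \<le> c * (\<Sum>k\<in>UNIV-{i}. g k)"
  unfolding sum_distrib_left
proof (rule sum_mono)
  fix k assume "k \<in> UNIV - {i}"
  then have k: "k \<noteq> i" by auto
  have h1: "\<bar>A$i$k\<bar> \<le> c" using assms(1)[OF k] .
  have h2: "\<bar>f k\<bar> \<le> g k" using assms(2)[OF k] .
  have "0 \<le> c" using order_trans[OF abs_ge_zero h1] .
  then show "\<bar>A$i$k\<bar> * \<bar>f k\<bar> \<le> c * g k"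
    using mult_mono[OF h1 h2 _ abs_ge_zero] by simp
qed

lemma card_minus1: "real (card (UNIV - {i::'n::finite})) = real CARD('n) - 1"
  by (simp add: card_Diff_singleton)


lemma col_est:
  fixes A :: "real^'n^'n" and f :: "'n \<Rightarrow> real" and E \<kappa> :: real
  defines "N \<equiv> real CARD('n)"
  assumes E0: "E \<ge> 0" and gap: "\<kappa> - E > 1"
    and diag: "\<And>i. \<bar>A$i$i\<bar> > \<kappa>"
    and offle: "\<And>i k. k \<noteq> i \<Longrightarrow> \<bar>A$i$k\<bar> \<le> E / N"
    and rows: "\<And>i. (\<Sum>k\<in>UNIV. A$i$k * f k) = (if i = j then 1 else 0)"
  shows "\<And>i. i \<noteq> j \<Longrightarrow> \<bar>f i\<bar> \<le> E / (N * (\<kappa> - E)^2)"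
    and "\<bar>A$j$j\<bar> * \<bar>f j\<bar> \<le> 1 + E^2 / (N * (\<kappa> - E)^2)"
    and "\<bar>A$j$j\<bar> * \<bar>f j\<bar> \<ge> 1 - E^2 / (N * (\<kappa> - E)^2)"
proof -
  define c where "c = E / N"
  have N1: "N \<ge> 1" unfolding N_def
    by (metis One_nat_def Suc_leI of_nat_1 of_nat_le_iff zero_less_card_finite)
  have c0: "c \<ge> 0" using E0 N1 by (simp add: c_def)
  have cN: "c * (N - 1) \<le> E" using E0 N1 by (simp add: c_def field_simps)
  have card: "real (card (UNIV - {i::'n})) = N - 1" for i
    unfolding N_def by (rule card_minus1)
  have sumconst: "(\<Sum>k\<in>UNIV-{i::'n}. (M::real)) = (N - 1) * M" for i M
    using card[of i] by simp
  have offle': "\<And>i k. k \<noteq> i \<Longrightarrow> \<bar>A$i$k\<bar> \<le> c" using offle by (simp add: c_def)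
  have kap: "\<kappa> > 1" using E0 gap by linarith
  define M where "M = Max (range (\<lambda>k. \<bar>f k\<bar>))"
  have "M \<in> range (\<lambda>k. \<bar>f k\<bar>)" unfolding M_def by (rule Max_in) auto
  then obtain i0 where i0: "M = \<bar>f i0\<bar>" by auto
  have Mge: "\<bar>f k\<bar> \<le> M" for k unfolding M_def by simp
  have M0: "M \<ge> 0" using i0 by simp
  have r0: "\<bar>A$i0$i0\<bar> * \<bar>f i0\<bar> \<le> 1 + (\<Sum>k\<in>UNIV-{i0}. \<bar>A$i0$k\<bar> * \<bar>f k\<bar>)"
    using row_upper(1)[OF rows[of i0]] by (simp split: if_splits)
  have "(\<Sum>k\<in>UNIV-{i0}. \<bar>A$i0$k\<bar> * \<bar>f k\<bar>) \<le> c * (\<Sum>k\<in>UNIV-{i0}. M)"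
    by (rule off_sum_le) (use offle' Mge in auto)
  also have "\<dots> = c * (N - 1) * M" by (subst sumconst) simp
  also have "\<dots> \<le> E * M" using cN M0 by (simp add: mult_right_mono)
  finally have s0: "(\<Sum>k\<in>UNIV-{i0}. \<bar>A$i0$k\<bar> * \<bar>f k\<bar>) \<le> E * M" .
  have "\<kappa> * M \<le> \<bar>A$i0$i0\<bar> * M" using diag[of i0] M0 by (simp add: mult_right_mono)
  moreover have "\<bar>A$i0$i0\<bar> * M \<le> 1 + (\<Sum>k\<in>UNIV-{i0}. \<bar>A$i0$k\<bar> * \<bar>f k\<bar>)"
    using r0 i0 by simp
  ultimately have "\<kappa> * M \<le> 1 + E * M" using s0 by linarith
  hence "(\<kappa> - E) * M \<le> 1" by (simp add: algebra_simps)
  hence Mle: "M \<le> 1 / (\<kappa> - E)" using gap by (simp add: field_simps)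
  define s where "s = Max (insert 0 ((\<lambda>k. \<bar>f k\<bar>) ` (UNIV - {j})))"
  have sge: "\<bar>f k\<bar> \<le> s" if "k \<noteq> j" for k unfolding s_def using that by simp
  have s0': "s \<ge> 0" unfolding s_def by simp
  have sin: "s \<in> insert 0 ((\<lambda>k. \<bar>f k\<bar>) ` (UNIV - {j}))"
    unfolding s_def by (rule Max_in) auto
  have skey: "s * (\<kappa> - E) \<le> c * \<bar>f j\<bar>"
  proof (cases "s = 0")
    case True then show ?thesis using c0 by simp
  next
    case False
    then obtain i1 where i1: "i1 \<noteq> j" "s = \<bar>f i1\<bar>" using sin by auto
    have r1: "\<bar>A$i1$i1\<bar> * s \<le> (\<Sum>k\<in>UNIV-{i1}. \<bar>A$i1$k\<bar> * \<bar>f k\<bar>)"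
      using row_upper(1)[OF rows[of i1]] i1 by simp
    have "(\<Sum>k\<in>UNIV-{i1}. \<bar>A$i1$k\<bar> * \<bar>f k\<bar>)
        \<le> c * (\<Sum>k\<in>UNIV-{i1}. s + (if k = j then \<bar>f j\<bar> else 0))"
      by (rule off_sum_le) (use offle' sge s0' in auto)
    also have "(\<Sum>k\<in>UNIV-{i1}. s + (if k = j then \<bar>f j\<bar> else 0)) = (N - 1) * s + \<bar>f j\<bar>"
      using i1 by (subst sum.distrib, subst sumconst) simp
    also have "c * ((N - 1) * s + \<bar>f j\<bar>) \<le> E * s + c * \<bar>f j\<bar>"
    proof -
      have "c * ((N - 1) * s + \<bar>f j\<bar>) = (c * (N - 1)) * s + c * \<bar>f j\<bar>" by (simp add: algebra_simps)
      moreover have "(c * (N - 1)) * s \<le> E * s" using mult_right_mono[OF cN s0'] .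
      ultimately show ?thesis by linarith
    qed
    finally have "\<bar>A$i1$i1\<bar> * s \<le> E * s + c * \<bar>f j\<bar>" using r1 by linarith
    moreover have "\<kappa> * s \<le> \<bar>A$i1$i1\<bar> * s" using diag[of i1] s0' by (simp add: mult_right_mono)
    ultimately show ?thesis by (simp add: algebra_simps)
  qed
  have "s * (\<kappa> - E) \<le> c * (1 / (\<kappa> - E))"
    using skey Mge[of j] Mle c0 by (meson mult_left_mono order_trans)
  hence "s \<le> (c * (1 / (\<kappa> - E))) / (\<kappa> - E)"
    using gap by (simp add: pos_le_divide_eq)
  also have "\<dots> = E / (N * (\<kappa> - E)^2)"
    by (simp add: c_def power2_eq_square)
  finally have sle: "s \<le> E / (N * (\<kappa> - E)^2)" .
  show "\<And>i. i \<noteq> j \<Longrightarrow> \<bar>f i\<bar> \<le> E / (N * (\<kappa> - E)^2)"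
    using sge sle by (meson order_trans)
  have "(\<Sum>k\<in>UNIV-{j}. \<bar>A$j$k\<bar> * \<bar>f k\<bar>) \<le> c * (\<Sum>k\<in>UNIV-{j}. s)"
    by (rule off_sum_le) (use offle' sge in auto)
  also have "\<dots> = c * (N - 1) * s" by (subst sumconst) simp
  also have "\<dots> \<le> E * s" using cN s0' by (simp add: mult_right_mono)
  also have "\<dots> \<le> E * (E / (N * (\<kappa> - E)^2))" by (rule mult_left_mono[OF sle E0])
  also have "\<dots> = E^2 / (N * (\<kappa> - E)^2)" by (simp add: power2_eq_square)
  finally have sj: "(\<Sum>k\<in>UNIV-{j}. \<bar>A$j$k\<bar> * \<bar>f k\<bar>) \<le> E^2 / (N * (\<kappa> - E)^2)" .
  show "\<bar>A$j$j\<bar> * \<bar>f j\<bar> \<le> 1 + E^2 / (N * (\<kappa> - E)^2)"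
    using row_upper(1)[OF rows[of j]] sj by simp
  show "\<bar>A$j$j\<bar> * \<bar>f j\<bar> \<ge> 1 - E^2 / (N * (\<kappa> - E)^2)"
    using row_upper(2)[OF rows[of j]] sj by simp
qed



lemma inv_mats:
  fixes A :: "real^'n^'n"
  assumes "invertible A"
  shows "A ** matrix_inv A = mat 1" "matrix_inv A ** A = mat 1"
proof -
  have "\<exists>A'. A ** A' = mat 1 \<and> A' ** A = mat 1" using assms unfolding invertible_def by blast
  from someI_ex[OF this] show "A ** matrix_inv A = mat 1" "matrix_inv A ** A = mat 1"
    unfolding matrix_inv_def by auto
qed

lemma diag_dom:
  fixes A :: "real^'n^'n" and E \<kappa> :: real
  assumes E0: "E \<ge> 0" and gap: "\<kappa> - E > 1"
    and diag: "\<And>i. \<bar>A$i$i\<bar> > \<kappa>"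
    and off: "\<And>i j. j \<noteq> i \<Longrightarrow> \<bar>A$i$j\<bar> < E / real CARD('n)"
  shows "invertible A \<and>
      (\<forall>i j. j \<noteq> i \<longrightarrow>
         \<bar>matrix_inv A $ i $ j\<bar> < (1 / \<kappa>) * (E + E\<^sup>2 / (\<kappa> - E)) / real CARD('n)) \<and>
      (\<forall>i. \<bar>matrix_inv A $ i $ i\<bar>
             \<le> (1 / \<kappa>) * (1 + E * (E + E\<^sup>2 / (\<kappa> - E)) / real CARD('n))) \<and>
      (\<forall>i. \<bar>matrix_inv A $ i $ i\<bar>
             \<ge> (1 / \<bar>A $ i $ i\<bar>) * (1 - E * (E + E\<^sup>2 / (\<kappa> - E)) / real CARD('n)))"
proof -
  define N where "N = real CARD('n)"
  have N1: "N \<ge> 1" unfolding N_def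
    by (metis One_nat_def Suc_leI of_nat_1 of_nat_le_iff zero_less_card_finite)
  have kap: "\<kappa> > 1" using E0 gap by linarith
  have g0: "\<kappa> - E > 0" using gap by linarith
  have offle: "\<And>i k. k \<noteq> i \<Longrightarrow> \<bar>A$i$k\<bar> \<le> E / N"
    using off unfolding N_def by (meson less_imp_le)
  have inj: "\<forall>x. A *v x = 0 \<longrightarrow> x = 0"
  proof (intro allI impI)
    fix x :: "real^'n" assume Ax: "A *v x = 0"
    define M where "M = Max (range (\<lambda>k. \<bar>x$k\<bar>))"
    have "M \<in> range (\<lambda>k. \<bar>x$k\<bar>)" unfolding M_def by (rule Max_in) auto
    then obtain i0 where i0: "M = \<bar>x$i0\<bar>" by auto
    have Mge: "\<bar>x$k\<bar> \<le> M" for k unfolding M_def by simp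
    have M0: "M \<ge> 0" using i0 by simp
    have row: "(\<Sum>k\<in>UNIV. A$i0$k * x$k) = 0"
      using Ax by (simp add: matrix_vector_mult_def vec_eq_iff)
    have r0: "\<bar>A$i0$i0\<bar> * M \<le> 0 + (\<Sum>k\<in>UNIV-{i0}. \<bar>A$i0$k\<bar> * \<bar>x$k\<bar>)"
      using row_upper(1)[OF row] i0 by simp
    have "(\<Sum>k\<in>UNIV-{i0}. \<bar>A$i0$k\<bar> * \<bar>x$k\<bar>) \<le> (E/N) * (\<Sum>k\<in>UNIV-{i0}. M)"
      by (rule off_sum_le) (use offle Mge in auto)
    also have "(\<Sum>k\<in>UNIV-{i0}. M) = (N - 1) * M"
      using card_minus1[of i0] unfolding N_def by simp
    also have "(E/N) * ((N - 1) * M) \<le> E * M"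
    proof -
      have "(E/N) * (N - 1) \<le> E" using E0 N1 by (simp add: field_simps)
      from mult_right_mono[OF this M0] show ?thesis by simp
    qed
    finally have s1: "(\<Sum>k\<in>UNIV-{i0}. \<bar>A$i0$k\<bar> * \<bar>x$k\<bar>) \<le> E * M" .
    have "\<kappa> * M \<le> \<bar>A$i0$i0\<bar> * M" using diag[of i0] M0 by (simp add: mult_right_mono)
    then have "\<kappa> * M \<le> E * M" using r0 s1 by linarith
    then have "(\<kappa> - E) * M \<le> 0" by (simp add: algebra_simps)
    then have "M \<le> 0" using g0 by (simp add: mult_le_0_iff)
    then have "\<bar>x$k\<bar> \<le> 0" for k using Mge[of k] by linarith
    then show "x = 0" by (simp add: vec_eq_iff)
  qed
  have inv: "invertible A"
    using inj unfolding invertible_left_inverse matrix_left_invertible_ker .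
  define B where "B = matrix_inv A"
  have AB: "A ** B = mat 1" unfolding B_def by (rule inv_mats(1)[OF inv])
  define \<delta> where "\<delta> = E^2 / (N * (\<kappa> - E)^2)"
  define X where "X = E * (E + E\<^sup>2 / (\<kappa> - E)) / N"
  have X_eq: "X = (E^2 / N) * (\<kappa> / (\<kappa> - E))"
    unfolding X_def using g0 N1 by (simp add: field_simps power2_eq_square)
  have d_eq: "\<delta> = (E^2 / N) * (1 / (\<kappa> - E)^2)"
    unfolding \<delta>_def by simp
  have a: "(\<kappa> - E) \<le> (\<kappa> - E)^2"
    using mult_left_mono[of 1 "\<kappa> - E" "\<kappa> - E"] gap by (simp add: power2_eq_square)
  have "1 / (\<kappa> - E)^2 \<le> 1 / (\<kappa> - E)"
    by (rule divide_left_mono[OF a]) (use g0 in auto)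
  also have "\<dots> \<le> \<kappa> / (\<kappa> - E)"
    by (rule divide_right_mono) (use kap g0 in auto)
  finally have "1 / (\<kappa> - E)^2 \<le> \<kappa> / (\<kappa> - E)" .
  then have dX: "\<delta> \<le> X" unfolding X_eq d_eq
    using N1 by (intro mult_left_mono) auto
  have col: "(\<Sum>k\<in>UNIV. A$i$k * B$k$j) = (if i = j then 1 else 0)" for i j
  proof -
    have "(A ** B) $ i $ j = (\<Sum>k\<in>UNIV. A$i$k * B$k$j)" by (simp add: matrix_matrix_mult_def)
    then show ?thesis using AB by (simp add: mat_def)
  qed
  have offle0: "\<And>i k. k \<noteq> i \<Longrightarrow> \<bar>A$i$k\<bar> \<le> E / real CARD('n)"
    using off by (meson less_imp_le)
  have call: "(\<forall>i. i \<noteq> j \<longrightarrow> \<bar>B$i$j\<bar> \<le> E / (N * (\<kappa> - E)^2)) \<and>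
      \<bar>A$j$j\<bar> * \<bar>B$j$j\<bar> \<le> 1 + \<delta> \<and> \<bar>A$j$j\<bar> * \<bar>B$j$j\<bar> \<ge> 1 - \<delta>" for j
  proof -
    define f where "f = (\<lambda>k. B$k$j)"
    have rows: "\<And>i. (\<Sum>k\<in>UNIV. A$i$k * f k) = (if i = j then 1 else 0)"
      using col unfolding f_def .
    note r = col_est[OF E0 gap diag offle0 rows]
    have r1: "\<forall>i. i \<noteq> j \<longrightarrow> \<bar>f i\<bar> \<le> E / (N * (\<kappa> - E)^2)"
      using r(1) unfolding N_def by blast
    have r2: "\<bar>A$j$j\<bar> * \<bar>f j\<bar> \<le> 1 + \<delta>" using r(2) unfolding \<delta>_def N_def .
    have r3: "\<bar>A$j$j\<bar> * \<bar>f j\<bar> \<ge> 1 - \<delta>" using r(3) unfolding \<delta>_def N_def .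
    show ?thesis using r1 r2 r3 unfolding f_def by blast
  qed
  have c1: "\<bar>B$i$j\<bar> \<le> E / (N * (\<kappa> - E)^2)" if "i \<noteq> j" for i j
    using call[of j] that by blast
  have c2: "\<bar>A$j$j\<bar> * \<bar>B$j$j\<bar> \<le> 1 + \<delta>" for j
    using call[of j] by blast
  have c3: "\<bar>A$j$j\<bar> * \<bar>B$j$j\<bar> \<ge> 1 - \<delta>" for j
    using call[of j] by blast
  have P1: "\<bar>B $ i $ j\<bar> < (1 / \<kappa>) * (E + E\<^sup>2 / (\<kappa> - E)) / N" if "j \<noteq> i" for i j
  proof -
    have "0 < E / real CARD('n)" using off[OF that] abs_ge_zero[of "A$i$j"] by linarith
    then have Epos: "E > 0" by (simp add: zero_less_divide_iff)
    have eq: "(1 / \<kappa>) * (E + E\<^sup>2 / (\<kappa> - E)) / N = E / (N * (\<kappa> - E))"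
      using g0 kap N1 by (simp add: field_simps power2_eq_square)
    have "N * (\<kappa> - E) < N * (\<kappa> - E)^2"
      using g0 gap N1 by (simp add: power2_eq_square)
    then have "E / (N * (\<kappa> - E)^2) < E / (N * (\<kappa> - E))"
      using Epos g0 N1 by (intro divide_strict_left_mono) auto
    moreover have "\<bar>B$i$j\<bar> \<le> E / (N * (\<kappa> - E)^2)" using c1[of i j] that by auto
    ultimately show ?thesis using eq by linarith
  qed
  have d0: "\<delta> \<ge> 0" unfolding \<delta>_def using N1 by simp
  have P2: "\<bar>B $ i $ i\<bar> \<le> (1 / \<kappa>) * (1 + X)" for i
  proof -
    have Ai: "\<bar>A$i$i\<bar> > 0" using diag[of i] kap by linarith
    have "\<bar>B$i$i\<bar> * \<bar>A$i$i\<bar> \<le> 1 + \<delta>" by (subst mult.commute) (rule c2)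
    then have "\<bar>B$i$i\<bar> \<le> (1 + \<delta>) / \<bar>A$i$i\<bar>" by (subst pos_le_divide_eq[OF Ai])
    also have "\<dots> \<le> (1 + \<delta>) / \<kappa>"
    proof -
      have h1: "\<kappa> \<le> \<bar>A$i$i\<bar>" using diag[of i] by linarith
      have h2: "0 \<le> 1 + \<delta>" using d0 by linarith
      have h3: "0 < \<bar>A$i$i\<bar> * \<kappa>" using Ai kap by simp
      show ?thesis by (rule divide_left_mono[OF h1 h2 h3])
    qed
    also have "\<dots> \<le> (1 + X) / \<kappa>"
    proof -
      have "1 + \<delta> \<le> 1 + X" using dX by linarith
      then show ?thesis by (rule divide_right_mono) (use kap in linarith)
    qed
    finally show ?thesis by simp
  qed
  have P3: "\<bar>B $ i $ i\<bar> \<ge> (1 / \<bar>A $ i $ i\<bar>) * (1 - X)" for i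
  proof -
    have Ai: "\<bar>A$i$i\<bar> > 0" using diag[of i] kap by linarith
    have "(1 / \<bar>A $ i $ i\<bar>) * (1 - X) = (1 - X) / \<bar>A$i$i\<bar>" by simp
    also have "\<dots> \<le> (1 - \<delta>) / \<bar>A$i$i\<bar>"
    proof -
      have "1 - X \<le> 1 - \<delta>" using dX by linarith
      then show ?thesis by (rule divide_right_mono) (use Ai in linarith)
    qed
    also have "\<dots> \<le> \<bar>B$i$i\<bar>"
    proof -
      have "1 - \<delta> \<le> \<bar>B$i$i\<bar> * \<bar>A$i$i\<bar>" by (subst mult.commute) (rule c3)
      then show ?thesis by (subst pos_divide_le_eq[OF Ai])
    qed
    finally show ?thesis .
  qed
  have final: "invertible A \<and>
      (\<forall>i j. j \<noteq> i \<longrightarrow> \<bar>B $ i $ j\<bar> < (1 / \<kappa>) * (E + E\<^sup>2 / (\<kappa> - E)) / N) \<and>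
      (\<forall>i. \<bar>B $ i $ i\<bar> \<le> (1 / \<kappa>) * (1 + X)) \<and>
      (\<forall>i. \<bar>B $ i $ i\<bar> \<ge> (1 / \<bar>A $ i $ i\<bar>) * (1 - X))"
  proof (intro conjI allI impI)
    show "invertible A" by (rule inv)
  next
    fix i j :: 'n assume "j \<noteq> i"
    then show "\<bar>B $ i $ j\<bar> < (1 / \<kappa>) * (E + E\<^sup>2 / (\<kappa> - E)) / N" by (rule P1)
  next
    fix i show "\<bar>B $ i $ i\<bar> \<le> (1 / \<kappa>) * (1 + X)" by (rule P2)
  next
    fix i show "\<bar>B $ i $ i\<bar> \<ge> (1 / \<bar>A $ i $ i\<bar>) * (1 - X)" by (rule P3)
  qed
  then show ?thesis unfolding B_def X_def N_def .
qed



lemma mv_axis: "((B::real^'n^'n) *v axis j 1) $ k = B $ k $ j"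
proof -
  have "(B *v axis j 1) $ k = (\<Sum>l\<in>UNIV. B$k$l * axis j 1 $ l)" by (simp add: matrix_vector_mult_def)
  also have "\<dots> = (\<Sum>l\<in>UNIV. if l = j then B$k$l else 0)" by (rule sum.cong) (auto simp: axis_def)
  also have "\<dots> = B$k$j" by simp
  finally show ?thesis .
qed

lemma matrix_inv_cramer:
  fixes A :: "real^'n^'n"
  assumes "det A \<noteq> 0"
  shows "matrix_inv A $ k $ j = det (\<chi> i l. if l = k then axis j 1 $ i else A$i$l) / det A"
proof -
  have inv: "invertible A" using assms invertible_det_nz by blast
  have "A *v (matrix_inv A *v axis j 1) = axis j 1"
    by (simp add: matrix_vector_mul_assoc inv_mats(1)[OF inv])
  then have "matrix_inv A *v axis j 1 = (\<chi> k. det(\<chi> i l. if l=k then axis j 1 $i else A$i$l) / det A)"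
    using cramer[OF assms] by blast
  then have "(matrix_inv A *v axis j 1) $ k = det (\<chi> i l. if l = k then axis j 1 $ i else A$i$l) / det A"
    by simp
  then show ?thesis by (simp add: mv_axis)
qed

lemma cont_det:
  fixes F :: "'a::topological_space \<Rightarrow> real^'n^'n"
  assumes "continuous_on S F"
  shows "continuous_on S (\<lambda>x. det (F x))"
  unfolding det_def by (intro continuous_intros continuous_on_component assms)

lemma cont_matrix_inv:
  fixes F :: "'a::topological_space \<Rightarrow> real^'n^'n"
  assumes "continuous_on S F" and "\<And>x. x \<in> S \<Longrightarrow> det (F x) \<noteq> 0"
  shows "continuous_on S (\<lambda>x. matrix_inv (F x))"
proof -
  have eq: "matrix_inv (F x) = (\<chi> k j. det (\<chi> i l. if l = k then axis j 1 $ i else F x$i$l) / det (F x))"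
    if "x \<in> S" for x
    using matrix_inv_cramer[OF assms(2)[OF that]] by (simp add: vec_eq_iff)
  have c: "continuous_on S (\<lambda>x. (\<chi> i l. if l = k then axis j 1 $ i else F x$i$l) :: real^'n^'n)" for k j
  proof (intro continuous_on_vec_lambda)
    fix i l show "continuous_on S (\<lambda>x. if l = k then axis j 1 $ i else F x $ i $ l)"
      by (cases "l = k") (simp_all add: continuous_on_component assms(1))
  qed
  have d: "continuous_on S (\<lambda>x. det (\<chi> i l. if l = k then axis j 1 $ i else F x$i$l) / det (F x))" for k j
    by (rule continuous_on_divide[OF cont_det[OF c] cont_det[OF assms(1)]]) (use assms(2) in blast)
  have "continuous_on S (\<lambda>x. (\<chi> k j. det (\<chi> i l. if l = k then axis j 1 $ i else F x$i$l) / det (F x)) :: real^'n^'n)"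
    by (intro continuous_on_vec_lambda d)
  then show ?thesis by (rule continuous_on_eq) (simp add: eq)
qed

lemma cont_mvblin:
  fixes M :: "'a::topological_space \<Rightarrow> real^'n^'n"
  assumes "continuous_on S M"
  shows "continuous_on S (\<lambda>x. Blinfun (\<lambda>h. M x *v h))"
proof -
  have eq: "Blinfun (\<lambda>h. M x *v h) = blinfun_of_matrix (\<lambda>i j. (M x *v j) \<bullet> i)" for x
    using blinfun_of_matrix_works[of "Blinfun (\<lambda>h. M x *v h)"]
    by (simp add: bounded_linear_Blinfun_apply)
  have "continuous_on S (\<lambda>x. blinfun_of_matrix (\<lambda>i j. (M x *v j) \<bullet> i))"
  proof (intro continuous_on_blinfun_of_matrix)
    fix i j :: "real^'n"
    show "continuous_on S (\<lambda>x. (M x *v j) \<bullet> i)"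
      unfolding inner_vec_def matrix_vector_mult_def
      by (simp, intro continuous_intros continuous_on_component assms)
  qed
  then show ?thesis by (simp add: eq)
qed

lemma local_diffeo_of:
  fixes H :: "real ^ 'n \<Rightarrow> real ^ 'n" and DH :: "real ^ 'n \<Rightarrow> real ^ 'n ^ 'n"
  assumes deriv: "\<And>x. (H has_derivative (\<lambda>h. DH x *v h)) (at x)"
    and cont: "continuous_on UNIV DH"
    and inv: "\<And>x. invertible (DH x)"
  shows "local_diffeomorphism H"
  unfolding local_diffeomorphism_def
proof
  fix x0
  define F' where "F' x = Blinfun (\<lambda>h. DH x *v h)" for x
  have F'a: "blinfun_apply (F' x) = (\<lambda>h. DH x *v h)" for x
    unfolding F'_def by (simp add: bounded_linear_Blinfun_apply)
  have derF: "(H has_derivative blinfun_apply (F' x)) (at x)" for x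
    using deriv by (simp add: F'a)
  have contF: "continuous_on S F'" for S
    unfolding F'_def by (rule cont_mvblin) (rule continuous_on_subset[OF cont], simp)
  define Iv where "Iv = Blinfun (\<lambda>h. matrix_inv (DH x0) *v h)"
  have IvF: "Iv o\<^sub>L F' x0 = id_blinfun"
    by (rule blinfun_eqI)
      (simp add: Iv_def F'a bounded_linear_Blinfun_apply matrix_vector_mul_assoc inv_mats(2)[OF inv])
  have derF': "\<And>x. x \<in> UNIV \<Longrightarrow> (H has_derivative blinfun_apply (F' x)) (at x)"
    using derF by simp
  obtain U' V g g' where U': "open U'" "U' \<subseteq> UNIV" "x0 \<in> U'" and V: "open V" "H x0 \<in> V"
    and hom: "homeomorphism U' V H g"
    and derg: "\<And>y. y \<in> V \<Longrightarrow> (g has_derivative (g' y)) (at y)"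
    and g': "\<And>y. y \<in> V \<Longrightarrow> g' y = inv (blinfun_apply (F'(g y)))"
    and "\<And>y. y \<in> V \<Longrightarrow> bij (blinfun_apply (F'(g y)))"
    using inverse_function_theorem[OF open_UNIV derF' contF UNIV_I IvF] by blast
  define G where "G y = Blinfun (\<lambda>h. matrix_inv (DH (g y)) *v h)" for y
  have Ga: "blinfun_apply (G y) = (\<lambda>h. matrix_inv (DH (g y)) *v h)" for y
    unfolding G_def by (simp add: bounded_linear_Blinfun_apply)
  have g'eq: "g' y = blinfun_apply (G y)" if "y \<in> V" for y
  proof -
    have "inv (\<lambda>h. DH (g y) *v h) = (\<lambda>h. matrix_inv (DH (g y)) *v h)"
      by (rule inv_unique_comp)
        (simp_all add: fun_eq_iff matrix_vector_mul_assoc inv_mats[OF inv])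
    then show ?thesis using g'[OF that] by (simp add: F'a Ga)
  qed
  have gc: "continuous_on V g" using homeomorphism_cont2[OF hom] .
  have ci: "continuous_on UNIV (\<lambda>x. matrix_inv (DH x))"
    by (rule cont_matrix_inv[OF cont]) (use inv invertible_det_nz in blast)
  have contG: "continuous_on V G"
    unfolding G_def
    by (rule cont_mvblin, rule continuous_on_compose2[OF ci gc]) auto
  show "\<exists>U V g. open U \<and> open V \<and> x0 \<in> U \<and> H ` U = V \<and>
          (\<forall>y\<in>U. g (H y) = y) \<and> (\<forall>z\<in>V. H (g z) = z) \<and> C1_on U H \<and> C1_on V g"
  proof (intro exI conjI)
    show "open U'" "open V" "x0 \<in> U'" by fact+
    show "H ` U' = V" "\<forall>y\<in>U'. g (H y) = y" "\<forall>z\<in>V. H (g z) = z"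
      using hom unfolding homeomorphism_def by auto
    show "C1_on U' H" unfolding C1_on_def
      by (intro exI[of _ F'] conjI ballI derF contF)
    show "C1_on V g" unfolding C1_on_def
    proof (intro exI[of _ G] conjI ballI)
      fix y assume y: "y \<in> V"
      show "(g has_derivative blinfun_apply (G y)) (at y)" using derg[OF y] g'eq[OF y] by simp
    next
      show "continuous_on V G" by (rule contG)
    qed
  qed
qed


theorem propositionB1:
  fixes H :: "real ^ 'n \<Rightarrow> real ^ 'n"
    and DH :: "real ^ 'n \<Rightarrow> real ^ 'n ^ 'n"
    and E \<kappa> :: real
  assumes lift: "torus_lift H"
    and deriv: "\<And>x. (H has_derivative (\<lambda>h. DH x *v h)) (at x)"
    and cont: "continuous_on UNIV DH"
    and E_nonneg: "E \<ge> 0" and kappa_nonneg: "\<kappa> \<ge> 0" and gap: "\<kappa> - E > 1"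
    and diag: "\<And>x i. \<bar>DH x $ i $ i\<bar> > \<kappa>"
    and offdiag: "\<And>x i j. j \<noteq> i \<Longrightarrow> \<bar>DH x $ i $ j\<bar> < E / real CARD('n)"
  shows "local_diffeomorphism H \<and>
    (\<forall>x. invertible (DH x) \<and>
      (\<forall>i j. j \<noteq> i \<longrightarrow>
         \<bar>matrix_inv (DH x) $ i $ j\<bar> < (1 / \<kappa>) * (E + E\<^sup>2 / (\<kappa> - E)) / real CARD('n)) \<and>
      (\<forall>i. \<bar>matrix_inv (DH x) $ i $ i\<bar>
             \<le> (1 / \<kappa>) * (1 + E * (E + E\<^sup>2 / (\<kappa> - E)) / real CARD('n))) \<and>
      (\<forall>i. \<bar>matrix_inv (DH x) $ i $ i\<bar>
             \<ge> (1 / \<bar>DH x $ i $ i\<bar>) * (1 - E * (E + E\<^sup>2 / (\<kappa> - E)) / real CARD('n))))"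
  proof -
  have D: "\<And>x. invertible (DH x) \<and>
      (\<forall>i j. j \<noteq> i \<longrightarrow>
         \<bar>matrix_inv (DH x) $ i $ j\<bar> < (1 / \<kappa>) * (E + E\<^sup>2 / (\<kappa> - E)) / real CARD('n)) \<and>
      (\<forall>i. \<bar>matrix_inv (DH x) $ i $ i\<bar>
             \<le> (1 / \<kappa>) * (1 + E * (E + E\<^sup>2 / (\<kappa> - E)) / real CARD('n))) \<and>
      (\<forall>i. \<bar>matrix_inv (DH x) $ i $ i\<bar>
             \<ge> (1 / \<bar>DH x $ i $ i\<bar>) * (1 - E * (E + E\<^sup>2 / (\<kappa> - E)) / real CARD('n)))"
    by (rule diag_dom[OF E_nonneg gap diag offdiag])
  have inv: "\<And>x. invertible (DH x)" using D by blast
  show ?thesis by (rule conjI[OF local_diffeo_of[OF deriv cont inv] allI[OF D]])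
qed

end
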